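(* Given an LDODOSP instance, period counters $(S^d,T^d)_{d\in\{1,\dots,D\}}$ are feasible if and only if they satisfy all of the following: $T^1=0$; for all $1\le d\le D-1$: $S^d\le S^{d+1}$, $T^d\le T^{d+1}$, $T^{d+1}\le S^d$, $S^{d+1}\le T^d+N$; $T^{l_w}=0$ and $S^{D-l_w+1}=S^D$; $T^{d+l_w}\le S^d$ for all $1\le d\le D-l_w$; $S^d\le T^{d+u_w}$ for all $1\le d\le D-u_w$; $S^1=S^{l_o}$ and $T^{D-l_o+1}=T^D$; $S^{d+l_o}-N\le T^d$ for all $1\le d\le D-l_o$; $T^d+N\le S^{d+u_o}$ for all $1\le d\le D-u_o$; $r_l^d\le S^d-T^d\le r_u^d$ for all $1\le d\le D$.
   Context: An instance of the Days On Days Off Scheduling Problem (DODOSP) consists of integers $D\ge 1$ (days), $N\ge 1$ (workers), bounds $l_w,u_w,l_o,u_o,U_w,U_o\in\mathbb{N}$, and for each day $d\in\{1,\dots,D\}$ integers $0\le r_l^d\le r_u^d\le N$. A schedule is a map $f:\{n_1,\dots,n_N\}\times\{1,\dots,D\}\to\{\mathrm{ON},\mathrm{OFF}\}$ (not cyclic). A work period (resp. off period) of a worker is an inclusion-wise maximal set of consecutive days on which the worker is ON (resp. OFF). A schedule is feasible if on every day $d$ the number of workers that are ON lies in $[r_l^d,r_u^d]$, every work period has length between $l_w$ and $u_w$, every off period has length between $l_o$ and $u_o$, every worker is ON on at most $U_w$ days and OFF on at most $U_o$ days. The LDODOSP is the DODOSP restricted to instances with $U_w=U_o=D$. Integers $(S^d,T^d)_{d\in\{1,\dots,D\}}$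 are called period counters if there is some schedule for $N$ workers on $D$ days (not necessarily feasible) such that for each $d$, $S^d$ is the number of work periods (over all workers) whose first day is among days $1,\dots,d$, and $T^d$ is the number of work periods whose last day is among days $1,\dots,d-1$; they then represent that schedule. Period counters are feasible if they represent a feasible schedule of the instance. *)

theory Defs
  imports Main
begin

(* A schedule: f i d = True iff worker i (0 <= i < N, representing n_{i+1}) is ON on day d (1 <= d <= D).
   Values outside these ranges are irrelevant. *)

definition work_period :: "nat \<Rightarrow> (nat \<Rightarrow> nat \<Rightarrow> bool) \<Rightarrow> nat \<Rightarrow> nat \<Rightarrow> nat \<Rightarrow> bool" where
  "work_period D f i a b \<longleftrightarrow> 1 \<le> a \<and> a \<le> b \<and> b \<le> D \<and> (\<forall>d\<in>{a..b}. f i d)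
     \<and> (a = 1 \<or> \<not> f i (a - 1)) \<and> (b = D \<or> \<not> f i (b + 1))"

definition off_period :: "nat \<Rightarrow> (nat \<Rightarrow> nat \<Rightarrow> bool) \<Rightarrow> nat \<Rightarrow> nat \<Rightarrow> nat \<Rightarrow> bool" where
  "off_period D f i a b \<longleftrightarrow> 1 \<le> a \<and> a \<le> b \<and> b \<le> D \<and> (\<forall>d\<in>{a..b}. \<not> f i d)
     \<and> (a = 1 \<or> f i (a - 1)) \<and> (b = D \<or> f i (b + 1))"

definition feasible_schedule ::
  "nat \<Rightarrow> nat \<Rightarrow> nat \<Rightarrow> nat \<Rightarrow> nat \<Rightarrow> nat \<Rightarrow> nat \<Rightarrow> nat \<Rightarrow> (nat \<Rightarrow> nat) \<Rightarrow> (nat \<Rightarrow> nat)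
   \<Rightarrow> (nat \<Rightarrow> nat \<Rightarrow> bool) \<Rightarrow> bool" where
  "feasible_schedule D N lw uw lo uo Uw Uo rl ru f \<longleftrightarrow>
     (\<forall>d\<in>{1..D}. rl d \<le> card {i. i < N \<and> f i d} \<and> card {i. i < N \<and> f i d} \<le> ru d)
   \<and> (\<forall>i<N. \<forall>a b. work_period D f i a b \<longrightarrow> lw \<le> b - a + 1 \<and> b - a + 1 \<le> uw)
   \<and> (\<forall>i<N. \<forall>a b. off_period D f i a b \<longrightarrow> lo \<le> b - a + 1 \<and> b - a + 1 \<le> uo)
   \<and> (\<forall>i<N. card {d\<in>{1..D}. f i d} \<le> Uw \<and> card {d\<in>{1..D}. \<not> f i d} \<le> Uo)"

definition represents :: "nat \<Rightarrow> nat \<Rightarrow> (nat \<Rightarrow> nat \<Rightarrow> bool) \<Rightarrow> (nat \<Rightarrow> int) \<Rightarrow> (nat \<Rightarrow> int) \<Rightarrow> bool" where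
  "represents D N f S T \<longleftrightarrow> (\<forall>d\<in>{1..D}.
      S d = int (card {(i, a, b). i < N \<and> work_period D f i a b \<and> a \<le> d})
    \<and> T d = int (card {(i, a, b). i < N \<and> work_period D f i a b \<and> b < d}))"

definition period_counters :: "nat \<Rightarrow> nat \<Rightarrow> (nat \<Rightarrow> int) \<Rightarrow> (nat \<Rightarrow> int) \<Rightarrow> bool" where
  "period_counters D N S T \<longleftrightarrow> (\<exists>f. represents D N f S T)"

definition feasible_counters ::
  "nat \<Rightarrow> nat \<Rightarrow> nat \<Rightarrow> nat \<Rightarrow> nat \<Rightarrow> nat \<Rightarrow> nat \<Rightarrow> nat \<Rightarrow> (nat \<Rightarrow> nat) \<Rightarrow> (nat \<Rightarrow> nat)
   \<Rightarrow> (nat \<Rightarrow> int) \<Rightarrow> (nat \<Rightarrow> int) \<Rightarrow> bool" where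
  "feasible_counters D N lw uw lo uo Uw Uo rl ru S T \<longleftrightarrow>
     (\<exists>f. feasible_schedule D N lw uw lo uo Uw Uo rl ru f \<and> represents D N f S T)"

end

theory Submission
  imports Defs
begin


definition run :: "nat \<Rightarrow> (nat \<Rightarrow> bool) \<Rightarrow> nat \<Rightarrow> nat \<Rightarrow> bool" where
  "run D p a b \<longleftrightarrow> 1 \<le> a \<and> a \<le> b \<and> b \<le> D \<and> (\<forall>d\<in>{a..b}. p d)
     \<and> (a = 1 \<or> \<not> p (a - 1)) \<and> (b = D \<or> \<not> p (b + 1))"

lemma wp_run: "work_period D f i a b = run D (f i) a b"
  by (simp add: work_period_def run_def)

lemma op_run: "off_period D f i a b = run D (\<lambda>d. \<not> f i d) a b"
  by (simp add: off_period_def run_def)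

lemma run_exists:
  assumes "1 \<le> d" "d \<le> D" "p d"
  shows "\<exists>a b. run D p a b \<and> a \<le> d \<and> d \<le> b"
proof -
  define Bs where "Bs = {b. d \<le> b \<and> b \<le> D \<and> (\<forall>x\<in>{d..b}. p x)}"
  define As where "As = {a. 1 \<le> a \<and> a \<le> d \<and> (\<forall>x\<in>{a..d}. p x)}"
  have finB: "finite Bs" unfolding Bs_def by (rule finite_subset[of _ "{..D}"]) auto
  have finA: "finite As" unfolding As_def by (rule finite_subset[of _ "{..d}"]) auto
  have dB: "d \<in> Bs" using assms unfolding Bs_def by auto
  have dA: "d \<in> As" using assms unfolding As_def by auto
  define b where "b = Max Bs"
  define a where "a = Min As"
  have bB: "b \<in> Bs" unfolding b_def using finB dB Max_in by blast
  have aA: "a \<in> As" unfolding a_def using finA dA Min_in by blast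
  have bmax: "\<And>y. y \<in> Bs \<Longrightarrow> y \<le> b" using finB b_def by simp
  have amin: "\<And>y. y \<in> As \<Longrightarrow> a \<le> y" using finA a_def by simp
  have b1: "d \<le> b" "b \<le> D" "\<forall>x\<in>{d..b}. p x" using bB unfolding Bs_def by auto
  have a1: "1 \<le> a" "a \<le> d" "\<forall>x\<in>{a..d}. p x" using aA unfolding As_def by auto
  have bend: "b = D \<or> \<not> p (b+1)"
  proof (rule ccontr)
    assume c: "\<not> (b = D \<or> \<not> p (b+1))"
    then have "b < D" "p (b+1)" using b1 by auto
    moreover have "\<forall>x\<in>{d..b+1}. p x"
    proof
      fix x assume "x \<in> {d..b+1}"
      then have "x \<in> {d..b} \<or> x = b + 1" by auto
      then show "p x" using b1 \<open>p (b+1)\<close> by blast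
    qed
    ultimately have "b + 1 \<in> Bs" using b1 unfolding Bs_def by simp
    then have "b + 1 \<le> b" by (rule bmax)
    then show False by simp
  qed
  have astart: "a = 1 \<or> \<not> p (a-1)"
  proof (rule ccontr)
    assume "\<not> (a = 1 \<or> \<not> p (a-1))"
    then have "a > 1" "p (a-1)" using a1 by auto
    moreover have "\<forall>x\<in>{a-1..d}. p x"
    proof
      fix x assume "x \<in> {a-1..d}"
      then have "x = a - 1 \<or> x \<in> {a..d}" by auto
      then show "p x" using a1 \<open>p (a-1)\<close> by blast
    qed
    ultimately have "a - 1 \<in> As" using a1 unfolding As_def by auto
    then have "a \<le> a - 1" by (rule amin)
    then show False using \<open>a > 1\<close> by simp
  qed
  have all: "\<forall>x\<in>{a..b}. p x"
  proof
    fix x assume x: "x \<in> {a..b}"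
    show "p x"
    proof (cases "x \<le> d")
      case True then have "x \<in> {a..d}" using x by simp
      then show ?thesis using a1 by blast
    next
      case False then have "x \<in> {d..b}" using x by simp
      then show ?thesis using b1 by blast
    qed
  qed
  have "run D p a b" unfolding run_def using a1 b1 bend astart all by simp
  then show ?thesis using a1 b1 by blast
qed

lemma run_unique:
  assumes r1: "run D p a1 b1" and r2: "run D p a2 b2" and "a1 \<le> a2" "a2 \<le> b1 + 1"
  shows "a1 = a2 \<and> b1 = b2"
proof -
  have a: "a1 = a2"
  proof (rule ccontr)
    assume "a1 \<noteq> a2"
    then have "a1 < a2" using assms by auto
    then have "a2 - 1 \<in> {a1..b1}" using assms by auto
    then have "p (a2 - 1)" using r1 unfolding run_def by auto
    moreover have "a2 \<noteq> 1" using \<open>a1 < a2\<close> r1 unfolding run_def by auto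
    ultimately show False using r2 unfolding run_def by auto
  qed
  have b: "b1 = b2"
  proof (rule ccontr)
    assume "b1 \<noteq> b2"
    then consider "b1 < b2" | "b2 < b1" by linarith
    then show False
    proof cases
      case 1
      then have "b1 + 1 \<in> {a2..b2}" using r1 a unfolding run_def by auto
      then show False using r1 r2 1 unfolding run_def by auto
    next
      case 2
      then have "b2 + 1 \<in> {a1..b1}" using r2 a unfolding run_def by auto
      then show False using r1 r2 2 unfolding run_def by auto
    qed
  qed
  show ?thesis using a b by simp
qed

definition WA :: "nat \<Rightarrow> nat \<Rightarrow> (nat \<Rightarrow> nat \<Rightarrow> bool) \<Rightarrow> nat \<Rightarrow> (nat \<times> nat \<times> nat) set" where
  "WA D N f d = {(i, a, b). i < N \<and> work_period D f i a b \<and> a \<le> d}"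
definition WB :: "nat \<Rightarrow> nat \<Rightarrow> (nat \<Rightarrow> nat \<Rightarrow> bool) \<Rightarrow> nat \<Rightarrow> (nat \<times> nat \<times> nat) set" where
  "WB D N f d = {(i, a, b). i < N \<and> work_period D f i a b \<and> b < d}"

lemma fin_wp: "finite {(i, a, b). i < N \<and> work_period D f i a b \<and> P i a b}"
  by (rule finite_subset[of _ "{..<N} \<times> {..D} \<times> {..D}"]) (auto simp: work_period_def)

lemma fin_WA: "finite (WA D N f d)" unfolding WA_def by (rule fin_wp)
lemma fin_WB: "finite (WB D N f d)" unfolding WB_def by (rule fin_wp)

lemma represents_iff: "represents D N f S T \<longleftrightarrow>
   (\<forall>d\<in>{1..D}. S d = int (card (WA D N f d)) \<and> T d = int (card (WB D N f d)))"
  by (simp add: represents_def WA_def WB_def)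

lemma card_le_N:
  assumes "\<And>i a1 b1 a2 b2. i < N \<Longrightarrow> work_period D f i a1 b1 \<Longrightarrow> work_period D f i a2 b2
     \<Longrightarrow> P a1 b1 \<Longrightarrow> P a2 b2 \<Longrightarrow> a1 \<le> a2 \<Longrightarrow> a1 = a2 \<and> b1 = b2"
  shows "card {(i, a, b). i < N \<and> work_period D f i a b \<and> P a b} \<le> N"
proof -
  let ?C = "{(i, a, b). i < N \<and> work_period D f i a b \<and> P a b}"
  have "inj_on fst ?C"
  proof (rule inj_onI)
    fix x y assume "x \<in> ?C" "y \<in> ?C" "fst x = fst y"
    then obtain i a1 b1 a2 b2 where x: "x = (i, a1, b1)" and y: "y = (i, a2, b2)"
      and h: "i < N" "work_period D f i a1 b1" "work_period D f i a2 b2" "P a1 b1" "P a2 b2"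
      by auto
    show "x = y"
    proof (cases "a1 \<le> a2")
      case True then show ?thesis using assms[OF h] x y by auto
    next
      case False then show ?thesis using assms[OF h(1,3,2,5,4)] x y by auto
    qed
  qed
  moreover have "fst ` ?C \<subseteq> {..<N}" by auto
  ultimately show ?thesis using card_inj_on_le[of fst ?C "{..<N}"] by simp
qed

lemma count_on:
  assumes "1 \<le> d" "d \<le> D"
  shows "WB D N f d \<subseteq> WA D N f d"
    and "card {i. i < N \<and> f i d} = card (WA D N f d) - card (WB D N f d)"
proof -
  show sub: "WB D N f d \<subseteq> WA D N f d" unfolding WA_def WB_def work_period_def by auto
  let ?C = "{(i, a, b). i < N \<and> work_period D f i a b \<and> a \<le> d \<and> d \<le> b}"
  have eq: "WA D N f d - WB D N f d = ?C" unfolding WA_def WB_def by auto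
  have inj: "inj_on fst ?C"
  proof (rule inj_onI)
    fix x y assume "x \<in> ?C" "y \<in> ?C" "fst x = fst y"
    then obtain i a1 b1 a2 b2 where x: "x = (i, a1, b1)" and y: "y = (i, a2, b2)"
      and h: "i < N" "work_period D f i a1 b1" "work_period D f i a2 b2" "a1 \<le> d" "d \<le> b1"
        "a2 \<le> d" "d \<le> b2"
      by auto
    show "x = y"
    proof (cases "a1 \<le> a2")
      case True then show ?thesis using run_unique[of D "f i" a1 b1 a2 b2] h x y by (auto simp: wp_run)
    next
      case False then show ?thesis using run_unique[of D "f i" a2 b2 a1 b1] h x y by (auto simp: wp_run)
    qed
  qed
  have img: "fst ` ?C = {i. i < N \<and> f i d}"
  proof
    show "fst ` ?C \<subseteq> {i. i < N \<and> f i d}" unfolding work_period_def by auto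
  next
    show "{i. i < N \<and> f i d} \<subseteq> fst ` ?C"
    proof
      fix i assume "i \<in> {i. i < N \<and> f i d}"
      then obtain a b where "run D (f i) a b" "a \<le> d" "d \<le> b" "i < N"
        using run_exists[of d D "f i"] assms by auto
      then have "(i, a, b) \<in> ?C" by (auto simp: wp_run)
      then show "i \<in> fst ` ?C" by force
    qed
  qed
  have "card {i. i < N \<and> f i d} = card ?C" using card_image[OF inj] img by simp
  also have "\<dots> = card (WA D N f d) - card (WB D N f d)"
    using eq card_Diff_subset[OF fin_WB sub] by simp
  finally show "card {i. i < N \<and> f i d} = card (WA D N f d) - card (WB D N f d)" .
qed



lemma off_after:
  assumes "work_period D f i a b" "b < D"
    and ofs: "\<And>a' b'. off_period D f i a' b' \<Longrightarrow> lo \<le> b' - a' + 1"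
  shows "b + lo \<le> D \<and> (\<forall>x. b < x \<and> x \<le> b + lo \<longrightarrow> \<not> f i x)"
proof -
  have nb: "\<not> f i (b+1)" using assms unfolding work_period_def by auto
  obtain a' b' where r: "run D (\<lambda>d. \<not> f i d) a' b'" "a' \<le> b+1" "b+1 \<le> b'"
    using run_exists[of "b+1" D "\<lambda>d. \<not> f i d"] nb assms(2) by auto
  have "a' = b + 1"
  proof (rule ccontr)
    assume "a' \<noteq> b+1"
    then have "b \<in> {a'..b'}" using r by auto
    then have "\<not> f i b" using r unfolding run_def by auto
    then show False using assms(1) unfolding work_period_def by auto
  qed
  moreover have "lo \<le> b' - a' + 1" using ofs r by (simp add: op_run)
  ultimately show ?thesis using r unfolding run_def by auto
qed

lemma off_before:
  assumes "work_period D f i a b" "1 < a"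
    and ofs: "\<And>a' b'. off_period D f i a' b' \<Longrightarrow> lo \<le> b' - a' + 1"
  shows "lo < a"
proof -
  have nb: "\<not> f i (a-1)" using assms unfolding work_period_def by auto
  obtain a' b' where r: "run D (\<lambda>d. \<not> f i d) a' b'" "a' \<le> a-1" "a-1 \<le> b'"
  proof -
    have "1 \<le> a - 1" "a - 1 \<le> D" using assms unfolding work_period_def by auto
    then show ?thesis using run_exists[of "a-1" D "\<lambda>d. \<not> f i d"] nb that by blast
  qed
  have "b' = a - 1"
  proof (rule ccontr)
    assume "b' \<noteq> a-1"
    then have "a \<in> {a'..b'}" using r by auto
    then have "\<not> f i a" using r unfolding run_def by auto
    then show False using assms(1) unfolding work_period_def by auto
  qed
  moreover have "lo \<le> b' - a' + 1" using ofs r by (simp add: op_run)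
  ultimately show ?thesis using r unfolding run_def by auto
qed

locale nec =
  fixes D N lw uw lo uo Uw Uo :: nat and rl ru :: "nat \<Rightarrow> nat" and f and S T :: "nat \<Rightarrow> int"
  assumes D1: "D \<ge> 1" and N1: "N \<ge> 1"
    and lw1: "1 \<le> lw" and lwD: "lw \<le> D" and lo1: "1 \<le> lo" and loD: "lo \<le> D"
    and fs: "feasible_schedule D N lw uw lo uo Uw Uo rl ru f" and rep: "represents D N f S T"
begin

abbreviation "A \<equiv> WA D N f"
abbreviation "B \<equiv> WB D N f"

lemma Sd: "1 \<le> d \<Longrightarrow> d \<le> D \<Longrightarrow> S d = int (card (A d))"
  using rep unfolding represents_iff by auto
lemma Td: "1 \<le> d \<Longrightarrow> d \<le> D \<Longrightarrow> T d = int (card (B d))"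
  using rep unfolding represents_iff by auto
lemma wpl: "i < N \<Longrightarrow> work_period D f i a b \<Longrightarrow> lw \<le> b - a + 1 \<and> b - a + 1 \<le> uw"
  using fs unfolding feasible_schedule_def by blast
lemma opl: "i < N \<Longrightarrow> off_period D f i a b \<Longrightarrow> lo \<le> b - a + 1 \<and> b - a + 1 \<le> uo"
  using fs unfolding feasible_schedule_def by blast
lemma dayc: "d \<in> {1..D} \<Longrightarrow> rl d \<le> card {i. i < N \<and> f i d} \<and> card {i. i < N \<and> f i d} \<le> ru d"
  using fs unfolding feasible_schedule_def by blast

lemma c1: "T 1 = 0"
proof -
  have "B 1 = {}" unfolding WB_def work_period_def by auto
  then show ?thesis using Td[of 1] D1 by simp
qed

lemma c2:
  assumes d: "1 \<le> d" "d \<le> D - 1"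
  shows "S d \<le> S (d + 1) \<and> T d \<le> T (d + 1) \<and> T (d + 1) \<le> S d \<and> S (d + 1) \<le> T d + int N"
proof -
  have r: "1 \<le> d" "d \<le> D" "1 \<le> d + 1" "d + 1 \<le> D" using d D1 by auto
  have "A d \<subseteq> A (d+1)" unfolding WA_def by auto
  then have "card (A d) \<le> card (A (d+1))" by (rule card_mono[OF fin_WA])
  then have e1: "S d \<le> S (d+1)" using Sd[OF r(1,2)] Sd[OF r(3,4)] by simp
  have "B d \<subseteq> B (d+1)" unfolding WB_def by auto
  then have "card (B d) \<le> card (B (d+1))" by (rule card_mono[OF fin_WB])
  then have e2: "T d \<le> T (d+1)" using Td[OF r(1,2)] Td[OF r(3,4)] by simp
  have "B (d+1) \<subseteq> A d" unfolding WB_def WA_def work_period_def by auto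
  then have "card (B (d+1)) \<le> card (A d)" by (rule card_mono[OF fin_WA])
  then have e3: "T (d+1) \<le> S d" using Sd[OF r(1,2)] Td[OF r(3,4)] by simp
  let ?C = "{(i, a, b). i < N \<and> work_period D f i a b \<and> (a \<le> d + 1 \<and> d \<le> b)}"
  have cC: "card ?C \<le> N"
  proof (rule card_le_N)
    fix i a1 b1 a2 b2 assume h: "i < N" "work_period D f i a1 b1" "work_period D f i a2 b2"
      "a1 \<le> d + 1 \<and> d \<le> b1" "a2 \<le> d + 1 \<and> d \<le> b2" "a1 \<le> a2"
    show "a1 = a2 \<and> b1 = b2" using run_unique[of D "f i" a1 b1 a2 b2] h by (simp add: wp_run)
  qed
  have finC: "finite ?C" using fin_wp[of N D f "\<lambda>i a b. a \<le> d + 1 \<and> d \<le> b"] by simp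
  have "A (d+1) \<subseteq> B d \<union> ?C" unfolding WA_def WB_def by auto
  then have "card (A (d+1)) \<le> card (B d \<union> ?C)" by (intro card_mono finite_UnI fin_WB finC)
  also have "\<dots> \<le> card (B d) + card ?C" by (rule card_Un_le)
  finally have e4: "S (d+1) \<le> T d + int N" using Sd[OF r(3,4)] Td[OF r(1,2)] cC by simp
  show ?thesis using e1 e2 e3 e4 by simp
qed


lemma c3: "T lw = 0"
proof -
  have "\<not> (i < N \<and> work_period D f i a b \<and> b < lw)" for i a b
  proof
    assume h: "i < N \<and> work_period D f i a b \<and> b < lw"
    then have "lw \<le> b - a + 1" using wpl by blast
    moreover have "1 \<le> a \<and> a \<le> b" using h by (simp add: work_period_def)
    ultimately show False using h by linarith
  qed
  then have "B lw = {}" unfolding WB_def by auto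
  then show ?thesis using Td[of lw] lw1 lwD by simp
qed

lemma c4: "S (D - lw + 1) = S D"
proof -
  have "x \<in> A (D - lw + 1)" if x: "x \<in> A D" for x
  proof -
    obtain i a b where xe: "x = (i, a, b)" and h: "i < N" "work_period D f i a b"
      using x unfolding WA_def by auto
    have "lw \<le> b - a + 1" using wpl h by blast
    moreover have "1 \<le> a \<and> a \<le> b \<and> b \<le> D" using h by (simp add: work_period_def)
    ultimately have "a \<le> D - lw + 1" by linarith
    then show ?thesis using xe h unfolding WA_def by simp
  qed
  moreover have "A (D - lw + 1) \<subseteq> A D" using lw1 unfolding WA_def work_period_def by auto
  ultimately have "A (D - lw + 1) = A D" by auto
  then show ?thesis using Sd[of D] Sd[of "D - lw + 1"] lwD lw1 D1 by simp
qed

lemma c5: assumes d: "1 \<le> d" "d + lw \<le> D" shows "T (d + lw) \<le> S d"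
proof -
  have "x \<in> A d" if x: "x \<in> B (d + lw)" for x
  proof -
    obtain i a b where xe: "x = (i, a, b)" and h: "i < N" "work_period D f i a b" "b < d + lw"
      using x unfolding WB_def by auto
    have "lw \<le> b - a + 1" using wpl h by blast
    moreover have "1 \<le> a \<and> a \<le> b \<and> b \<le> D" using h by (simp add: work_period_def)
    ultimately have "a \<le> d" using h by linarith
    then show ?thesis using xe h unfolding WA_def by simp
  qed
  then have "B (d + lw) \<subseteq> A d" by auto
  then have "card (B (d + lw)) \<le> card (A d)" by (rule card_mono[OF fin_WA])
  then show ?thesis using Sd[of d] Td[of "d + lw"] d lw1 by simp
qed

lemma c6: assumes d: "1 \<le> d" "d + uw \<le> D" shows "S d \<le> T (d + uw)"
proof -
  have "x \<in> B (d + uw)" if x: "x \<in> A d" for x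
  proof -
    obtain i a b where xe: "x = (i, a, b)" and h: "i < N" "work_period D f i a b" "a \<le> d"
      using x unfolding WA_def by auto
    have "b - a + 1 \<le> uw" using wpl h by blast
    moreover have "1 \<le> a \<and> a \<le> b \<and> b \<le> D" using h by (simp add: work_period_def)
    ultimately have "b < d + uw" using h by linarith
    then show ?thesis using xe h unfolding WB_def by simp
  qed
  then have "A d \<subseteq> B (d + uw)" by auto
  then have "card (A d) \<le> card (B (d + uw))" by (rule card_mono[OF fin_WB])
  then show ?thesis using Sd[of d] Td[of "d + uw"] d by simp
qed

lemma opl': "i < N \<Longrightarrow> off_period D f i a' b' \<Longrightarrow> lo \<le> b' - a' + 1"
  using opl by blast

lemma c7: "S 1 = S lo"
proof -
  have "A lo \<subseteq> A 1"
  proof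
    fix x assume x: "x \<in> A lo"
    then obtain i a b where xe: "x = (i, a, b)" and h: "i < N" "work_period D f i a b" "a \<le> lo"
      unfolding WA_def by auto
    have "a = 1"
    proof (rule ccontr)
      assume "a \<noteq> 1"
      then have "1 < a" using h unfolding work_period_def by auto
      then have "lo < a" using off_before[OF h(2)] opl'[OF h(1)] by blast
      then show False using h by simp
    qed
    then show "x \<in> A 1" using xe h unfolding WA_def by auto
  qed
  moreover have "A 1 \<subseteq> A lo" using lo1 unfolding WA_def by auto
  ultimately have "A 1 = A lo" by auto
  then show ?thesis using Sd[of 1] Sd[of lo] lo1 loD by simp
qed

lemma c8: "T (D - lo + 1) = T D"
proof -
  have "B D \<subseteq> B (D - lo + 1)"
  proof
    fix x assume x: "x \<in> B D"
    then obtain i a b where xe: "x = (i, a, b)" and h: "i < N" "work_period D f i a b" "b < D"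
      unfolding WB_def by auto
    have "b + lo \<le> D" using off_after[OF h(2,3)] opl'[OF h(1)] by blast
    then show "x \<in> B (D - lo + 1)" using xe h unfolding WB_def by auto
  qed
  moreover have "B (D - lo + 1) \<subseteq> B D" using lo1 unfolding WB_def work_period_def by auto
  ultimately have "B D = B (D - lo + 1)" by auto
  then show ?thesis using Td[of D] Td[of "D - lo + 1"] lo1 loD D1 by simp
qed

lemma c9: assumes d: "1 \<le> d" "d + lo \<le> D" shows "S (d + lo) - int N \<le> T d"
proof -
  let ?C = "{(i, a, b). i < N \<and> work_period D f i a b \<and> (a \<le> d + lo \<and> d \<le> b)}"
  have cC: "card ?C \<le> N"
  proof (rule card_le_N)
    fix i a1 b1 a2 b2 assume h: "i < N" "work_period D f i a1 b1" "work_period D f i a2 b2"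
      "a1 \<le> d + lo \<and> d \<le> b1" "a2 \<le> d + lo \<and> d \<le> b2" "a1 \<le> a2"
    show "a1 = a2 \<and> b1 = b2"
    proof (cases "a2 \<le> b1 + 1")
      case True
      then show ?thesis using run_unique[of D "f i" a1 b1 a2 b2] h by (simp add: wp_run)
    next
      case False
      then have "b1 < D" using h(3) unfolding work_period_def by auto
      then have nf: "\<forall>x. b1 < x \<and> x \<le> b1 + lo \<longrightarrow> \<not> f i x"
        using off_after[OF h(2)] opl'[OF h(1)] by blast
      have "f i a2" using h(3) unfolding work_period_def by auto
      then have "\<not> (b1 < a2 \<and> a2 \<le> b1 + lo)" using nf by blast
      then have "b1 + lo < a2" using False by linarith
      then show ?thesis using h by linarith
    qed
  qed
  have finC: "finite ?C" using fin_wp[of N D f "\<lambda>i a b. a \<le> d + lo \<and> d \<le> b"] by simp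
  have "A (d+lo) \<subseteq> B d \<union> ?C" unfolding WA_def WB_def by auto
  then have "card (A (d+lo)) \<le> card (B d \<union> ?C)" by (intro card_mono finite_UnI fin_WB finC)
  also have "\<dots> \<le> card (B d) + card ?C" by (rule card_Un_le)
  finally show ?thesis using Sd[of "d+lo"] Td[of d] d cC by simp
qed

lemma c10: assumes d: "1 \<le> d" "d + uo \<le> D" shows "T d + int N \<le> S (d + uo)"
proof -
  let ?C = "{(i, a, b). i < N \<and> work_period D f i a b \<and> (a \<le> d + uo \<and> d \<le> b)}"
  have sub: "{..<N} \<subseteq> fst ` ?C"
  proof
    fix i assume i: "i \<in> {..<N}"
    have "\<exists>e. d \<le> e \<and> e \<le> d + uo \<and> f i e"
    proof (rule ccontr)
      assume ne: "\<not> (\<exists>e. d \<le> e \<and> e \<le> d + uo \<and> f i e)"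
      then have "\<not> f i d" by auto
      then obtain a' b' where r: "run D (\<lambda>x. \<not> f i x) a' b'" "a' \<le> d" "d \<le> b'"
        using run_exists[of d D "\<lambda>x. \<not> f i x"] d by auto
      have rr: "1 \<le> a'" "b' \<le> D" "b' = D \<or> f i (b' + 1)" using r(1) unfolding run_def by auto
      have "d + uo \<le> b'"
      proof (rule ccontr)
        assume "\<not> d + uo \<le> b'"
        then have "b' \<noteq> D" "d \<le> b' + 1" "b' + 1 \<le> d + uo" using d r by auto
        then show False using rr ne by blast
      qed
      moreover have "b' - a' + 1 \<le> uo" using opl[of i a' b'] i r by (simp add: op_run)
      ultimately show False using r rr by linarith
    qed
    then obtain e where e: "d \<le> e" "e \<le> d + uo" "f i e" by auto
    then obtain a b where "run D (f i) a b" "a \<le> e" "e \<le> b"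
      using run_exists[of e D "f i"] d by auto
    then have "(i, a, b) \<in> ?C" using e i by (simp add: wp_run)
    then show "i \<in> fst ` ?C" by force
  qed
  have finC: "finite ?C" using fin_wp[of N D f "\<lambda>i a b. a \<le> d + uo \<and> d \<le> b"] by simp
  have cC: "N \<le> card ?C"
    using card_mono[OF finite_imageI[OF finC] sub] card_image_le[OF finC, of fst] by simp
  have "B d \<union> ?C \<subseteq> A (d+uo)" unfolding WA_def WB_def work_period_def by auto
  then have "card (B d \<union> ?C) \<le> card (A (d+uo))" by (rule card_mono[OF fin_WA])
  moreover have "card (B d \<union> ?C) = card (B d) + card ?C"
    by (rule card_Un_disjoint[OF fin_WB finC]) (auto simp: WB_def)
  ultimately show ?thesis using Sd[of "d+uo"] Td[of d] d cC by simp
qed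

lemma c11: assumes d: "1 \<le> d" "d \<le> D" shows "int (rl d) \<le> S d - T d \<and> S d - T d \<le> int (ru d)"
proof -
  have "card (B d) \<le> card (A d)" using count_on(1)[of d D N f] d card_mono[OF fin_WA] by blast
  then have "S d - T d = int (card {i. i < N \<and> f i d})"
    using count_on(2)[of d D N f] d Sd[of d] Td[of d] by simp
  then show ?thesis using dayc[of d] d by simp
qed

lemma necessity: "T 1 = 0
      \<and> (\<forall>d. 1 \<le> d \<and> d \<le> D - 1 \<longrightarrow>
            S d \<le> S (d + 1) \<and> T d \<le> T (d + 1) \<and> T (d + 1) \<le> S d \<and> S (d + 1) \<le> T d + int N)
      \<and> T lw = 0 \<and> S (D - lw + 1) = S D
      \<and> (\<forall>d. 1 \<le> d \<and> d + lw \<le> D \<longrightarrow> T (d + lw) \<le> S d)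
      \<and> (\<forall>d. 1 \<le> d \<and> d + uw \<le> D \<longrightarrow> S d \<le> T (d + uw))
      \<and> S 1 = S lo \<and> T (D - lo + 1) = T D
      \<and> (\<forall>d. 1 \<le> d \<and> d + lo \<le> D \<longrightarrow> S (d + lo) - int N \<le> T d)
      \<and> (\<forall>d. 1 \<le> d \<and> d + uo \<le> D \<longrightarrow> T d + int N \<le> S (d + uo))
      \<and> (\<forall>d. 1 \<le> d \<and> d \<le> D \<longrightarrow> int (rl d) \<le> S d - T d \<and> S d - T d \<le> int (ru d))"
  using c1 c2 c3 c4 c5 c6 c7 c8 c9 c10 c11 by blast
end


locale suff =
  fixes D N lw uw lo uo :: nat and S T :: "nat \<Rightarrow> int"
  assumes D1: "D \<ge> 1" and N1: "N \<ge> 1" and lw1: "1 \<le> lw" and lwD: "lw \<le> D"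
    and lo1: "1 \<le> lo" and loD: "lo \<le> D"
    and T1: "T 1 = 0"
    and stp: "\<forall>d. 1 \<le> d \<and> d \<le> D - 1 \<longrightarrow>
            S d \<le> S (d + 1) \<and> T d \<le> T (d + 1) \<and> T (d + 1) \<le> S d \<and> S (d + 1) \<le> T d + int N"
    and Tlw: "T lw = 0" and Slw: "S (D - lw + 1) = S D"
    and c5: "\<forall>d. 1 \<le> d \<and> d + lw \<le> D \<longrightarrow> T (d + lw) \<le> S d"
    and c6: "\<forall>d. 1 \<le> d \<and> d + uw \<le> D \<longrightarrow> S d \<le> T (d + uw)"
    and Slo: "S 1 = S lo" and Tlo: "T (D - lo + 1) = T D"
    and c9: "\<forall>d. 1 \<le> d \<and> d + lo \<le> D \<longrightarrow> S (d + lo) - int N \<le> T d"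
    and c10: "\<forall>d. 1 \<le> d \<and> d + uo \<le> D \<longrightarrow> T d + int N \<le> S (d + uo)"
    and TS: "\<forall>d. 1 \<le> d \<and> d \<le> D \<longrightarrow> T d \<le> S d"
    and S1N: "S 1 \<le> int N"
begin

lemma Smono: assumes "1 \<le> x" "x \<le> y" "y \<le> D" shows "S x \<le> S y"
proof -
  have "x + k \<le> D \<longrightarrow> S x \<le> S (x + k)" for k
  proof (induction k)
    case 0 then show ?case by simp
  next
    case (Suc k)
    show ?case
    proof
      assume h: "x + Suc k \<le> D"
      then have "S (x + k) \<le> S (x + k + 1)" using stp assms(1) by auto
      then show "S x \<le> S (x + Suc k)" using Suc h by simp
    qed
  qed
  from this[of "y - x"] show ?thesis using assms by simp
qed

lemma Tmono: assumes "1 \<le> x" "x \<le> y" "y \<le> D" shows "T x \<le> T y"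
proof -
  have "x + k \<le> D \<longrightarrow> T x \<le> T (x + k)" for k
  proof (induction k)
    case 0 then show ?case by simp
  next
    case (Suc k)
    show ?case
    proof
      assume h: "x + Suc k \<le> D"
      then have "T (x + k) \<le> T (x + k + 1)" using stp assms(1) by auto
      then show "T x \<le> T (x + Suc k)" using Suc h by simp
    qed
  qed
  from this[of "y - x"] show ?thesis using assms by simp
qed

lemma Tnn: "1 \<le> d \<Longrightarrow> d \<le> D \<Longrightarrow> 0 \<le> T d"
  using Tmono[of 1 d] T1 by simp

lemma Snn: "1 \<le> d \<Longrightarrow> d \<le> D \<Longrightarrow> 0 \<le> S d"
  using Tnn[of d] TS by force

definition K :: nat where "K = nat (S D)"

lemma K_eq: "int K = S D" unfolding K_def using Snn[of D] D1 by simp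

definition sig :: "nat \<Rightarrow> nat" where "sig k = (LEAST d. 1 \<le> d \<and> int k < S d)"
definition tau :: "nat \<Rightarrow> nat" where "tau k = (LEAST d. 1 \<le> d \<and> (D \<le> d \<or> int k < T (d + 1)))"

lemma sig_props: assumes "k < K" shows "1 \<le> sig k" "sig k \<le> D" "int k < S (sig k)"
proof -
  have P: "1 \<le> D \<and> int k < S D" using D1 assms K_eq by simp
  show "1 \<le> sig k" "int k < S (sig k)"
    using LeastI[of "\<lambda>d. 1 \<le> d \<and> int k < S d", OF P] unfolding sig_def by auto
  show "sig k \<le> D" unfolding sig_def by (rule Least_le[of "\<lambda>d. 1 \<le> d \<and> int k < S d", OF P])
qed

lemma sig_iff: assumes "k < K" "1 \<le> d" "d \<le> D" shows "sig k \<le> d \<longleftrightarrow> int k < S d"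
proof
  assume "sig k \<le> d"
  then show "int k < S d" using sig_props[OF assms(1)] Smono[of "sig k" d] assms by force
next
  assume "int k < S d"
  then show "sig k \<le> d" unfolding sig_def using assms by (intro Least_le) simp
qed

lemma tau_props: "1 \<le> tau k" "tau k \<le> D" "D \<le> tau k \<or> int k < T (tau k + 1)"
proof -
  have P: "1 \<le> D \<and> (D \<le> D \<or> int k < T (D + 1))" using D1 by simp
  show "1 \<le> tau k" "D \<le> tau k \<or> int k < T (tau k + 1)"
    using LeastI[of "\<lambda>d. 1 \<le> d \<and> (D \<le> d \<or> int k < T (d + 1))", OF P] unfolding tau_def by auto
  show "tau k \<le> D" unfolding tau_def
    by (rule Least_le[of "\<lambda>d. 1 \<le> d \<and> (D \<le> d \<or> int k < T (d + 1))", OF P])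
qed

lemma tau_iff: assumes "1 \<le> d" "d \<le> D" shows "tau k < d \<longleftrightarrow> int k < T d"
proof
  assume h: "tau k < d"
  then have "int k < T (tau k + 1)" using tau_props[of k] assms by auto
  moreover have "T (tau k + 1) \<le> T d" using Tmono[of "tau k + 1" d] h assms by simp
  ultimately show "int k < T d" by simp
next
  assume h: "int k < T d"
  have "d \<noteq> 1" using h T1 by auto
  then have "1 \<le> d - 1 \<and> (D \<le> d - 1 \<or> int k < T (d - 1 + 1))" using assms h by auto
  then have "tau k \<le> d - 1" unfolding tau_def by (rule Least_le)
  then show "tau k < d" using \<open>d \<noteq> 1\<close> assms by simp
qed

lemma tau_lt_D: "tau k < D \<Longrightarrow> int k < T (tau k + 1)"
  using tau_props[of k] by auto

lemma sig_mono: assumes "k \<le> k'" "k' < K" shows "sig k \<le> sig k'"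
proof -
  have "int k < S (sig k')" using sig_props[OF assms(2)] assms(1) by simp
  then show ?thesis using sig_iff[of k "sig k'"] sig_props[OF assms(2)] assms by simp
qed

lemma tau_mono: assumes "k \<le> k'" shows "tau k \<le> tau k'"
proof (cases "tau k' < D")
  case True
  then have "int k < T (tau k' + 1)" using tau_lt_D[of k'] assms by simp
  then have "tau k < tau k' + 1" using tau_iff[of "tau k' + 1" k] True by simp
  then show ?thesis by simp
next
  case False then show ?thesis using tau_props[of k] by simp
qed

lemma lw_bound: assumes "k < K" shows "sig k + lw \<le> tau k + 1"
proof (cases "tau k < D")
  case False
  then have t: "tau k = D" using tau_props[of k] by simp
  have "int k < S (D - lw + 1)" using Slw K_eq assms by simp
  then have "sig k \<le> D - lw + 1" using sig_iff[of k "D - lw + 1"] assms lwD lw1 by simp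
  then show ?thesis using t lwD by simp
next
  case True
  then have h: "int k < T (tau k + 1)" by (rule tau_lt_D)
  show ?thesis
  proof (cases "tau k + 1 \<le> lw")
    case True
    then have "T (tau k + 1) \<le> T lw" using Tmono[of "tau k + 1" lw] lwD by simp
    then show ?thesis using h Tlw by simp
  next
    case False
    define d where "d = tau k + 1 - lw"
    have d: "1 \<le> d" "d + lw = tau k + 1" "d + lw \<le> D" using False True unfolding d_def by auto
    then have "T (tau k + 1) \<le> S d" using c5 by force
    then have "int k < S d" using h by simp
    then have "sig k \<le> d" using sig_iff[of k d] assms d by simp
    then show ?thesis using d by simp
  qed
qed

lemma sig_le_tau: "k < K \<Longrightarrow> sig k \<le> tau k"
  using lw_bound[of k] lw1 by simp

lemma uw_bound: assumes "k < K" shows "tau k < sig k + uw"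
proof (cases "sig k + uw \<le> D")
  case True
  then have "S (sig k) \<le> T (sig k + uw)" using c6 sig_props[OF assms] by simp
  then have "int k < T (sig k + uw)" using sig_props[OF assms] by simp
  then show ?thesis using tau_iff[of "sig k + uw" k] True sig_props[OF assms] by simp
next
  case False then show ?thesis using tau_props[of k] by simp
qed

lemma tau_lo: assumes "tau k < D" shows "tau k + lo \<le> D"
proof (rule ccontr)
  assume c: "\<not> tau k + lo \<le> D"
  have h: "int k < T (tau k + 1)" using tau_lt_D[OF assms] .
  have "\<not> int k < T (tau k)" using tau_iff[of "tau k" k] tau_props[of k] by simp
  moreover have "T (D - lo + 1) \<le> T (tau k)" using Tmono[of "D - lo + 1" "tau k"] c assms loD by simp
  moreover have "T (tau k + 1) \<le> T D" using Tmono[of "tau k + 1" D] assms by simp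
  ultimately show False using h Tlo by simp
qed

lemma gap: assumes "k + N < K"
  shows "tau k + lo + 1 \<le> sig (k + N)" "sig (k + N) \<le> tau k + uo + 1" "tau k < D"
proof -
  let ?s = "sig (k + N)"
  have s: "1 \<le> ?s" "?s \<le> D" "int (k + N) < S ?s" using sig_props[OF assms] by auto
  have "?s \<noteq> 1" using s S1N by auto
  then have s2: "2 \<le> ?s" using s by simp
  then have "1 \<le> ?s - 1 \<and> ?s - 1 \<le> D - 1" using s s2 by linarith
  then have "S (?s - 1 + 1) \<le> T (?s - 1) + int N" using stp by blast
  then have "S ?s \<le> T (?s - 1) + int N" using s2 by simp
  then have "int k < T (?s - 1)" using s by simp
  then have tl: "tau k < ?s - 1" using tau_iff[of "?s - 1" k] s2 s by simp
  then show tD: "tau k < D" using s by simp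
  have h: "int k < T (tau k + 1)" using tau_lt_D[OF tD] .
  have tlo: "tau k + lo \<le> D" using tau_lo[OF tD] .
  show "tau k + lo + 1 \<le> ?s"
  proof (rule ccontr)
    assume c: "\<not> tau k + lo + 1 \<le> ?s"
    have "S (tau k + lo) - int N \<le> T (tau k)" using c9 tlo tau_props[of k] by simp
    moreover have "S ?s \<le> S (tau k + lo)" using Smono[of ?s "tau k + lo"] c s tlo by simp
    ultimately have "int k < T (tau k)" using s by simp
    then show False using tau_iff[of "tau k" k] tau_props[of k] by simp
  qed
  show "?s \<le> tau k + uo + 1"
  proof (cases "tau k + 1 + uo \<le> D")
    case True
    then have "T (tau k + 1) + int N \<le> S (tau k + 1 + uo)" using c10[rule_format, of "tau k + 1"] by simp
    then have "int (k + N) < S (tau k + 1 + uo)" using h by simp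
    then have "?s \<le> tau k + 1 + uo" using sig_iff[of "k + N" "tau k + 1 + uo"] True assms by simp
    then show ?thesis by simp
  next
    case False then show ?thesis using s by simp
  qed
qed

lemma init: assumes "i < N" "i < K"
  shows "1 < sig i \<Longrightarrow> lo < sig i" and "sig i \<le> 1 + uo"
proof -
  assume "1 < sig i"
  then have "\<not> int i < S 1" using sig_iff[of i 1] assms D1 by simp
  show "lo < sig i"
  proof (rule ccontr)
    assume "\<not> lo < sig i"
    then have "S (sig i) \<le> S lo" using Smono[of "sig i" lo] sig_props[OF assms(2)] loD by simp
    then show False using sig_props[OF assms(2)] Slo \<open>\<not> int i < S 1\<close> by simp
  qed
next
  show "sig i \<le> 1 + uo"
  proof (cases "1 + uo \<le> D")
    case True
    then have "T 1 + int N \<le> S (1 + uo)" using c10[rule_format, of 1] by simp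
    then have "int i < S (1 + uo)" using T1 assms by simp
    then show ?thesis using sig_iff[of i "1 + uo"] True assms by simp
  next
    case False then show ?thesis using sig_props[OF assms(2)] by simp
  qed
qed

lemma never: assumes "K \<le> i" "i < N" shows "D \<le> uo"
proof (rule ccontr)
  assume "\<not> D \<le> uo"
  then have "T 1 + int N \<le> S (1 + uo)" using c10[rule_format, of 1] by simp
  moreover have "S (1 + uo) \<le> S D" using Smono[of "1 + uo" D] \<open>\<not> D \<le> uo\<close> by simp
  ultimately show False using K_eq assms T1 by simp
qed

lemma final: assumes "k < K" "K \<le> k + N" "tau k < D" shows "D \<le> tau k + uo"
proof (rule ccontr)
  assume c: "\<not> D \<le> tau k + uo"
  then have "T (tau k + 1) + int N \<le> S (tau k + 1 + uo)" using c10[rule_format, of "tau k + 1"] by simp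
  moreover have "S (tau k + 1 + uo) \<le> S D" using Smono[of "tau k + 1 + uo" D] c by simp
  moreover have "int k < T (tau k + 1)" using tau_lt_D[OF assms(3)] .
  ultimately show False using K_eq assms by simp
qed

lemma residue: assumes "k < k'" "k mod N = k' mod N" shows "k + N \<le> k'"
proof -
  have "N dvd (k' - k)" using assms mod_eq_dvd_iff_nat[of k k' N] by simp
  moreover have "0 < k' - k" using assms by simp
  ultimately have "N \<le> k' - k" by (rule dvd_imp_le)
  then show ?thesis using assms by simp
qed

lemma sep: assumes "k < k'" "k' < K" "k mod N = k' mod N" shows "tau k + lo + 1 \<le> sig k'"
proof -
  have kk: "k + N \<le> k'" using residue assms by blast
  then have "tau k + lo + 1 \<le> sig (k + N)" using gap(1)[of k] assms by simp
  also have "\<dots> \<le> sig k'" using sig_mono[OF kk assms(2)] .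
  finally show ?thesis .
qed

definition g :: "nat \<Rightarrow> nat \<Rightarrow> bool" where
  "g i x \<longleftrightarrow> (\<exists>k<K. k mod N = i \<and> sig k \<le> x \<and> x \<le> tau k)"

lemma not_after: assumes "k < K" "tau k < x" "x \<le> tau k + lo" shows "\<not> g (k mod N) x"
proof
  assume "g (k mod N) x"
  then obtain k' where k': "k' < K" "k' mod N = k mod N" "sig k' \<le> x" "x \<le> tau k'"
    unfolding g_def by auto
  consider "k' < k" | "k' = k" | "k < k'" by linarith
  then show False
  proof cases
    case 1 then show False using sep[of k' k] k' assms sig_le_tau[of k] by simp
  next
    case 2 then show False using k' assms by simp
  next
    case 3 then show False using sep[of k k'] k' assms by simp
  qed
qed

lemma not_before: assumes "k < K" "x < sig k" "sig k \<le> x + lo" shows "\<not> g (k mod N) x"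
proof
  assume "g (k mod N) x"
  then obtain k' where k': "k' < K" "k' mod N = k mod N" "sig k' \<le> x" "x \<le> tau k'"
    unfolding g_def by auto
  consider "k' < k" | "k' = k" | "k < k'" by linarith
  then show False
  proof cases
    case 1 then show False using sep[of k' k] k' assms by simp
  next
    case 2 then show False using k' assms by simp
  next
    case 3 then show False using sep[of k k'] k' assms sig_le_tau[of k] by simp
  qed
qed

lemma wp_char: assumes "i < N"
  shows "work_period D g i a b \<longleftrightarrow> (\<exists>k<K. k mod N = i \<and> a = sig k \<and> b = tau k)"
proof
  assume "\<exists>k<K. k mod N = i \<and> a = sig k \<and> b = tau k"
  then obtain k where k: "k < K" "k mod N = i" "a = sig k" "b = tau k" by auto
  have r1: "1 \<le> a" "a \<le> b" "b \<le> D" using k sig_props[of k] sig_le_tau[of k] tau_props[of k] by auto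
  have r2: "\<forall>x\<in>{a..b}. g i x" using k unfolding g_def by auto
  have r3: "a = 1 \<or> \<not> g i (a - 1)"
  proof (cases "a = 1")
    case False
    then show ?thesis using not_before[of k "a - 1"] k r1 lo1 by simp
  qed simp
  have r4: "b = D \<or> \<not> g i (b + 1)"
  proof (cases "b = D")
    case False
    then show ?thesis using not_after[of k "b + 1"] k r1 lo1 by simp
  qed simp
  show "work_period D g i a b" unfolding work_period_def using r1 r2 r3 r4 by blast
next
  assume w: "work_period D g i a b"
  have r: "1 \<le> a" "a \<le> b" "b \<le> D" "\<forall>x\<in>{a..b}. g i x" "a = 1 \<or> \<not> g i (a - 1)"
    "b = D \<or> \<not> g i (b + 1)" using w unfolding work_period_def by auto
  have "g i a" using r by auto
  then obtain k where k: "k < K" "k mod N = i" "sig k \<le> a" "a \<le> tau k" unfolding g_def by auto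
  have "g i b" using r by auto
  then obtain k' where k': "k' < K" "k' mod N = i" "sig k' \<le> b" "b \<le> tau k'" unfolding g_def by auto
  have ak: "a = sig k"
  proof (rule ccontr)
    assume "a \<noteq> sig k"
    then have "g i (a - 1)" using k unfolding g_def by (intro exI[of _ k]) auto
    then show False using r \<open>a \<noteq> sig k\<close> k sig_props[of k] by auto
  qed
  have bk: "b = tau k'"
  proof (rule ccontr)
    assume "b \<noteq> tau k'"
    then have "g i (b + 1)" using k' unfolding g_def by (intro exI[of _ k']) auto
    then show False using r \<open>b \<noteq> tau k'\<close> k' tau_props[of k'] by auto
  qed
  have "k = k'"
  proof (rule ccontr)
    assume "k \<noteq> k'"
    then consider "k < k'" | "k' < k" by linarith
    then show False
    proof cases
      case 1
      have s: "tau k + lo + 1 \<le> sig k'" using sep[of k k'] 1 k k' by simp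
      have "\<not> g i (tau k + 1)" using not_after[of k "tau k + 1"] k lo1 by simp
      moreover have "tau k + 1 \<in> {a..b}" using s ak bk k k' sig_le_tau[of k'] by auto
      ultimately show False using r by blast
    next
      case 2
      have s: "tau k' + lo + 1 \<le> sig k" using sep[of k' k] 2 k k' by simp
      then show False using ak bk r by simp
    qed
  qed
  then show "\<exists>k<K. k mod N = i \<and> a = sig k \<and> b = tau k" using k ak bk by blast
qed


lemma inj_trip: "inj_on (\<lambda>k. (k mod N, sig k, tau k)) {k. k < K}"
proof (rule inj_onI)
  fix k k' assume h: "k \<in> {k. k < K}" "k' \<in> {k. k < K}"
    "(k mod N, sig k, tau k) = (k' mod N, sig k', tau k')"
  show "k = k'"
  proof (rule ccontr)
    assume "k \<noteq> k'"
    then consider "k < k'" | "k' < k" by linarith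
    then show False
    proof cases
      case 1 then show False using sep[of k k'] h sig_le_tau[of k] by simp
    next
      case 2 then show False using sep[of k' k] h sig_le_tau[of k'] by simp
    qed
  qed
qed

lemma WA_g: assumes d: "1 \<le> d" "d \<le> D"
  shows "WA D N g d = (\<lambda>k. (k mod N, sig k, tau k)) ` {k. k < nat (S d)}"
proof -
  have SK: "S d \<le> int K" using Smono[of d D] d K_eq by simp
  show ?thesis
  proof
    show "WA D N g d \<subseteq> (\<lambda>k. (k mod N, sig k, tau k)) ` {k. k < nat (S d)}"
    proof
      fix x assume "x \<in> WA D N g d"
      then obtain i a b where xe: "x = (i, a, b)" and h: "i < N" "work_period D g i a b" "a \<le> d"
        unfolding WA_def by auto
      obtain k where k: "k < K" "k mod N = i" "a = sig k" "b = tau k" using wp_char[OF h(1)] h(2) by auto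
      have "int k < S d" using sig_iff[of k d] k h d by simp
      then have "k < nat (S d)" by simp
      then show "x \<in> (\<lambda>k. (k mod N, sig k, tau k)) ` {k. k < nat (S d)}" using xe k by auto
    qed
  next
    show "(\<lambda>k. (k mod N, sig k, tau k)) ` {k. k < nat (S d)} \<subseteq> WA D N g d"
    proof
      fix x assume "x \<in> (\<lambda>k. (k mod N, sig k, tau k)) ` {k. k < nat (S d)}"
      then obtain k where xe: "x = (k mod N, sig k, tau k)" and k: "k < nat (S d)" by auto
      have kK: "k < K" using k SK by simp
      have "int k < S d" using k by simp
      then have "sig k \<le> d" using sig_iff[of k d] kK d by simp
      moreover have "k mod N < N" using N1 by simp
      moreover have "work_period D g (k mod N) (sig k) (tau k)" using wp_char[of "k mod N"] kK N1 by auto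
      ultimately show "x \<in> WA D N g d" using xe unfolding WA_def by simp
    qed
  qed
qed

lemma WB_g: assumes d: "1 \<le> d" "d \<le> D"
  shows "WB D N g d = (\<lambda>k. (k mod N, sig k, tau k)) ` {k. k < nat (T d)}"
proof -
  have SK: "T d \<le> int K" using Smono[of d D] d K_eq TS by force
  show ?thesis
  proof
    show "WB D N g d \<subseteq> (\<lambda>k. (k mod N, sig k, tau k)) ` {k. k < nat (T d)}"
    proof
      fix x assume "x \<in> WB D N g d"
      then obtain i a b where xe: "x = (i, a, b)" and h: "i < N" "work_period D g i a b" "b < d"
        unfolding WB_def by auto
      obtain k where k: "k < K" "k mod N = i" "a = sig k" "b = tau k" using wp_char[OF h(1)] h(2) by auto
      have "int k < T d" using tau_iff[of d k] k h d by simp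
      then have "k < nat (T d)" by simp
      then show "x \<in> (\<lambda>k. (k mod N, sig k, tau k)) ` {k. k < nat (T d)}" using xe k by auto
    qed
  next
    show "(\<lambda>k. (k mod N, sig k, tau k)) ` {k. k < nat (T d)} \<subseteq> WB D N g d"
    proof
      fix x assume "x \<in> (\<lambda>k. (k mod N, sig k, tau k)) ` {k. k < nat (T d)}"
      then obtain k where xe: "x = (k mod N, sig k, tau k)" and k: "k < nat (T d)" by auto
      have kK: "k < K" using k SK by simp
      have "int k < T d" using k by simp
      then have "tau k < d" using tau_iff[of d k] d by simp
      moreover have "k mod N < N" using N1 by simp
      moreover have "work_period D g (k mod N) (sig k) (tau k)" using wp_char[of "k mod N"] kK N1 by auto
      ultimately show "x \<in> WB D N g d" using xe unfolding WB_def by simp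
    qed
  qed
qed

lemma rep_g: "represents D N g S T"
  unfolding represents_iff
proof
  fix d assume "d \<in> {1..D}"
  then have d: "1 \<le> d" "d \<le> D" by auto
  have SK: "S d \<le> int K" using Smono[of d D] d K_eq by simp
  have TK: "T d \<le> int K" using SK d TS by force
  have i1: "inj_on (\<lambda>k. (k mod N, sig k, tau k)) {k. k < nat (S d)}"
    by (rule inj_on_subset[OF inj_trip]) (use SK in auto)
  have i2: "inj_on (\<lambda>k. (k mod N, sig k, tau k)) {k. k < nat (T d)}"
    by (rule inj_on_subset[OF inj_trip]) (use TK in auto)
  have "card (WA D N g d) = nat (S d)" using WA_g[OF d] card_image[OF i1] by simp
  moreover have "card (WB D N g d) = nat (T d)" using WB_g[OF d] card_image[OF i2] by simp
  ultimately show "S d = int (card (WA D N g d)) \<and> T d = int (card (WB D N g d))"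
    using Snn[OF d] Tnn[OF d] by simp
qed

lemma work_bound: assumes "i < N" "work_period D g i a b" shows "lw \<le> b - a + 1 \<and> b - a + 1 \<le> uw"
proof -
  obtain k where k: "k < K" "k mod N = i" "a = sig k" "b = tau k" using wp_char[OF assms(1)] assms(2) by auto
  show ?thesis using lw_bound[OF k(1)] uw_bound[OF k(1)] k(3,4) lw1 by linarith
qed

lemma first_start: assumes "g i x" shows "i < K \<and> sig i \<le> x"
proof -
  obtain k where k: "k < K" "k mod N = i" "sig k \<le> x" "x \<le> tau k" using assms unfolding g_def by auto
  have "i \<le> k" using k(2) by (metis mod_less_eq_dividend)
  then show ?thesis using sig_mono[of i k] k by simp
qed

lemma g_at: "k < K \<Longrightarrow> sig k \<le> x \<Longrightarrow> x \<le> tau k \<Longrightarrow> g (k mod N) x"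
  unfolding g_def by blast

lemma off_bound: assumes i: "i < N" and op: "off_period D g i a b"
  shows "lo \<le> b - a + 1 \<and> b - a + 1 \<le> uo"
proof -
  have r: "1 \<le> a" "a \<le> b" "b \<le> D" "\<forall>x\<in>{a..b}. \<not> g i x" "a = 1 \<or> g i (a - 1)" "b = D \<or> g i (b + 1)"
    using op unfolding off_period_def by auto
  have off: "\<And>x. a \<le> x \<Longrightarrow> x \<le> b \<Longrightarrow> \<not> g i x" using r(4) by auto
  show ?thesis
  proof (cases "a = 1")
    case False
    then have "g i (a - 1)" using r by simp
    then obtain k where k: "k < K" "k mod N = i" "sig k \<le> a - 1" "a - 1 \<le> tau k" unfolding g_def by auto
    have ta: "tau k = a - 1"
    proof (rule ccontr)
      assume "tau k \<noteq> a - 1"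
      then have "g i a" using g_at[of k a] k by simp
      then show False using off[of a] r by simp
    qed
    have tD: "tau k < D" using ta r False by simp
    show ?thesis
    proof (cases "b = D")
      case True
      have "K \<le> k + N"
      proof (rule ccontr)
        assume "\<not> K \<le> k + N"
        then have kN: "k + N < K" by simp
        have s: "1 \<le> sig (k + N)" "sig (k + N) \<le> D" using sig_props[OF kN] by auto
        have "tau k + lo + 1 \<le> sig (k + N)" using gap(1)[OF kN] .
        moreover have "g i (sig (k + N))" using g_at[of "k + N" "sig (k + N)"] kN sig_le_tau[OF kN] k by simp
        ultimately show False using off[of "sig (k + N)"] ta True s by simp
      qed
      then have "D \<le> tau k + uo" using final[OF k(1) _ tD] by simp
      moreover have "tau k + lo \<le> D" using tau_lo[OF tD] .
      ultimately show ?thesis using ta True False r by linarith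
    next
      case bD: False
      then have "g i (b + 1)" using r by simp
      then obtain k' where k': "k' < K" "k' mod N = i" "sig k' \<le> b + 1" "b + 1 \<le> tau k'" unfolding g_def by auto
      have sk': "sig k' = b + 1"
      proof (rule ccontr)
        assume "sig k' \<noteq> b + 1"
        then have "g i b" using g_at[of k' b] k' by simp
        then show False using off[of b] r by simp
      qed
      have "k < k'"
      proof (rule ccontr)
        assume "\<not> k < k'"
        then have "sig k' \<le> sig k" using sig_mono[of k' k] k by simp
        then show False using sk' k r by simp
      qed
      then have kk: "k + N \<le> k'" using residue[of k k'] k k' by simp
      then have kN: "k + N < K" using k' by simp
      have g1: "tau k + lo + 1 \<le> sig (k + N)" "sig (k + N) \<le> tau k + uo + 1" using gap[OF kN] by auto
      have "sig (k + N) \<le> b + 1" using sig_mono[OF kk k'(1)] sk' by simp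
      moreover have "\<not> sig (k + N) \<le> b"
      proof
        assume "sig (k + N) \<le> b"
        moreover have "g i (sig (k + N))" using g_at[of "k + N" "sig (k + N)"] kN sig_le_tau[OF kN] k by simp
        ultimately show False using off[of "sig (k + N)"] g1 ta by simp
      qed
      ultimately have "sig (k + N) = b + 1" by simp
      then show ?thesis using g1 ta False r by linarith
    qed
  next
    case a1: True
    show ?thesis
    proof (cases "b = D")
      case True
      have "K \<le> i"
      proof (rule ccontr)
        assume "\<not> K \<le> i"
        then have iK: "i < K" by simp
        have "g i (sig i)" using g_at[of i "sig i"] iK sig_le_tau[OF iK] i by simp
        then show False using off[of "sig i"] sig_props[OF iK] a1 True by simp
      qed
      then have "D \<le> uo" using never i by simp
      then show ?thesis using a1 True loD D1 by simp
    next
      case False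
      then have "g i (b + 1)" using r by simp
      then have fs: "i < K" "sig i \<le> b + 1" using first_start by auto
      have "\<not> sig i \<le> b"
      proof
        assume "sig i \<le> b"
        moreover have "g i (sig i)" using g_at[of i "sig i"] fs sig_le_tau[of i] i by simp
        ultimately show False using off[of "sig i"] sig_props[OF fs(1)] a1 by simp
      qed
      then have si: "sig i = b + 1" using fs by simp
      then have "lo < sig i" using init(1)[OF i fs(1)] r by simp
      moreover have "sig i \<le> 1 + uo" using init(2)[OF i fs(1)] .
      ultimately show ?thesis using si a1 r(1,2) by simp
    qed
  qed
qed
end

theorem corollary5p10:
  fixes D N lw uw lo uo :: nat and rl ru :: "nat \<Rightarrow> nat" and S T :: "nat \<Rightarrow> int"
  assumes "D \<ge> 1" and "N \<ge> 1"
    and "\<forall>d\<in>{1..D}. rl d \<le> ru d \<and> ru d \<le> N"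
    and "1 \<le> lw" and "lw \<le> D" and "1 \<le> lo" and "lo \<le> D"
    and "period_counters D N S T"
  shows "feasible_counters D N lw uw lo uo D D rl ru S T \<longleftrightarrow>
     (T 1 = 0
      \<and> (\<forall>d. 1 \<le> d \<and> d \<le> D - 1 \<longrightarrow>
            S d \<le> S (d + 1) \<and> T d \<le> T (d + 1) \<and> T (d + 1) \<le> S d \<and> S (d + 1) \<le> T d + int N)
      \<and> T lw = 0 \<and> S (D - lw + 1) = S D
      \<and> (\<forall>d. 1 \<le> d \<and> d + lw \<le> D \<longrightarrow> T (d + lw) \<le> S d)
      \<and> (\<forall>d. 1 \<le> d \<and> d + uw \<le> D \<longrightarrow> S d \<le> T (d + uw))
      \<and> S 1 = S lo \<and> T (D - lo + 1) = T D
      \<and> (\<forall>d. 1 \<le> d \<and> d + lo \<le> D \<longrightarrow> S (d + lo) - int N \<le> T d)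
      \<and> (\<forall>d. 1 \<le> d \<and> d + uo \<le> D \<longrightarrow> T d + int N \<le> S (d + uo))
      \<and> (\<forall>d. 1 \<le> d \<and> d \<le> D \<longrightarrow> int (rl d) \<le> S d - T d \<and> S d - T d \<le> int (ru d)))"
  (is "?L \<longleftrightarrow> ?R")
proof
  assume ?L
  then obtain f where fs: "feasible_schedule D N lw uw lo uo D D rl ru f" and rep: "represents D N f S T"
    unfolding feasible_counters_def by blast
  interpret n: nec D N lw uw lo uo D D rl ru f S T
    using assms fs rep by unfold_locales auto
  show ?R by (rule n.necessity)
next
  assume R: ?R
  have TS: "\<forall>d. 1 \<le> d \<and> d \<le> D \<longrightarrow> T d \<le> S d" using R by force
  have S1N: "S 1 \<le> int N"
  proof -
    have "S 1 - T 1 \<le> int (ru 1)" using R assms(1) by blast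
    moreover have "ru 1 \<le> N" using assms(1,3) by auto
    ultimately show ?thesis using R by simp
  qed
  interpret s: suff D N lw uw lo uo S T
    using assms R TS S1N by unfold_locales auto
  have rep: "represents D N s.g S T" by (rule s.rep_g)
  have fsd: "\<forall>d\<in>{1..D}. rl d \<le> card {i. i < N \<and> s.g i d} \<and> card {i. i < N \<and> s.g i d} \<le> ru d"
  proof
    fix d assume d: "d \<in> {1..D}"
    then have d': "1 \<le> d" "d \<le> D" by auto
    have cA: "S d = int (card (WA D N s.g d))" and cB: "T d = int (card (WB D N s.g d))"
      using rep d unfolding represents_iff by auto
    have "card (WB D N s.g d) \<le> card (WA D N s.g d)"
      using count_on(1)[OF d'] card_mono[OF fin_WA] by blast
    then have "int (card {i. i < N \<and> s.g i d}) = S d - T d"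
      using count_on(2)[OF d', of N s.g] cA cB by simp
    moreover have "int (rl d) \<le> S d - T d \<and> S d - T d \<le> int (ru d)" using R d' by blast
    ultimately show "rl d \<le> card {i. i < N \<and> s.g i d} \<and> card {i. i < N \<and> s.g i d} \<le> ru d"
      by simp
  qed
  have U: "\<forall>i<N. card {d\<in>{1..D}. s.g i d} \<le> D \<and> card {d\<in>{1..D}. \<not> s.g i d} \<le> D"
  proof (intro allI impI conjI)
    fix i
    have "card {d\<in>{1..D}. s.g i d} \<le> card {1..D}" by (rule card_mono) auto
    then show "card {d\<in>{1..D}. s.g i d} \<le> D" by simp
    have "card {d\<in>{1..D}. \<not> s.g i d} \<le> card {1..D}" by (rule card_mono) auto
    then show "card {d\<in>{1..D}. \<not> s.g i d} \<le> D" by simp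
  qed
  have "feasible_schedule D N lw uw lo uo D D rl ru s.g"
    unfolding feasible_schedule_def
    using fsd U s.work_bound s.off_bound by blast
  then show ?L unfolding feasible_counters_def using rep by blast
qed

end
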